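(* Let $r\in\mathcal R$ be a universal proper distance matrix and $(\mathcal U_r,\rho_r)$ the completion of $(\mathbb N,r)$. For any finite set $\{a_1,\dots,a_n\}\subset\mathcal U_r$ and any distance matrix $q$ of order $N>n$ whose upper-left $n\times n$ corner equals $\{\rho_r(a_i,a_j)\}_{i,j=1}^n$, there exist points $a_{n+1},\dots,a_N\in\mathcal U_r$ such that the distance matrix $\{\rho_r(a_i,a_j)\}_{i,j=1}^N$ equals $q$.
   Context: $\mathcal R$ is the set of infinite real matrices $r=\{r_{i,j}\}_{i,j\ge1}$ with $r_{i,i}=0$, $r_{i,j}\ge0$, $r_{i,j}=r_{j,i}$, $r_{i,k}+r_{k,j}\ge r_{i,j}$; a distance matrix of order $N$ is an $N\times N$ matrix with these properties; $r$ is proper if $r_{i,j}>0$ for $i\ne j$; $p_n(r)$ is the upper-left $n\times n$ corner. For an $n\times n$ distance matrix $q$, $A(q)=\{a\in\mathbb R^n:|a_i-a_j|\le q_{i,j}\le a_i+a_j\ \forall i,j\}$. A proper $r\in\mathcal R$ is universal if for every $n$, every $a\in A(p_n(r))$ and every $\epsilon>0$ there is $m\in\mathbb N$ with $\max_{1\le i\le n}|r_{i,m}-a_i|<\epsilon$. *)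

theory Defs
  imports "HOL-Analysis.Analysis"
begin

(* Matrices are functions nat => nat => real, indexed from 1 (entries with index 0 are ignored). *)

definition distance_matrix :: "nat \<Rightarrow> (nat \<Rightarrow> nat \<Rightarrow> real) \<Rightarrow> bool" where
  "distance_matrix N q \<longleftrightarrow>
     (\<forall>i\<in>{1..N}. q i i = 0) \<and>
     (\<forall>i\<in>{1..N}. \<forall>j\<in>{1..N}. q i j \<ge> 0 \<and> q i j = q j i) \<and>
     (\<forall>i\<in>{1..N}. \<forall>j\<in>{1..N}. \<forall>k\<in>{1..N}. q i k + q k j \<ge> q i j)"

definition inR :: "(nat \<Rightarrow> nat \<Rightarrow> real) \<Rightarrow> bool" where
  "inR r \<longleftrightarrow>
     (\<forall>i\<ge>1. r i i = 0) \<and>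
     (\<forall>i\<ge>1. \<forall>j\<ge>1. r i j \<ge> 0 \<and> r i j = r j i) \<and>
     (\<forall>i\<ge>1. \<forall>j\<ge>1. \<forall>k\<ge>1. r i k + r k j \<ge> r i j)"

definition proper :: "(nat \<Rightarrow> nat \<Rightarrow> real) \<Rightarrow> bool" where
  "proper r \<longleftrightarrow> inR r \<and> (\<forall>i\<ge>1. \<forall>j\<ge>1. i \<noteq> j \<longrightarrow> r i j > 0)"

definition corner :: "nat \<Rightarrow> (nat \<Rightarrow> nat \<Rightarrow> real) \<Rightarrow> (nat \<Rightarrow> nat \<Rightarrow> real)" where
  "corner n r = (\<lambda>i j. if i \<le> n \<and> j \<le> n then r i j else 0)"

definition Aset :: "nat \<Rightarrow> (nat \<Rightarrow> nat \<Rightarrow> real) \<Rightarrow> (nat \<Rightarrow> real) set" where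
  "Aset n q = {a. \<forall>i\<in>{1..n}. \<forall>j\<in>{1..n}. \<bar>a i - a j\<bar> \<le> q i j \<and> q i j \<le> a i + a j}"

definition universal :: "(nat \<Rightarrow> nat \<Rightarrow> real) \<Rightarrow> bool" where
  "universal r \<longleftrightarrow> proper r \<and>
     (\<forall>n. \<forall>a\<in>Aset n (corner n r). \<forall>\<epsilon>>0. \<exists>m\<ge>1. \<forall>i\<in>{1..n}. \<bar>r i m - a i\<bar> < \<epsilon>)"

end

theory Submission
  imports Defs
begin

lemma geo_cauchy:
  fixes z :: "nat \<Rightarrow> 'a::metric_space"
  assumes h: "\<And>n. dist (z n) (z (Suc n)) \<le> 2 * (1/2)^n"
  shows "Cauchy z"
proof -
  have tel: "dist (z m) (z (m + k)) \<le> 4 * (1/2)^m - 4 * (1/2)^(m+k)" for m k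
  proof (induction k)
    case 0 then show ?case by simp
  next
    case (Suc k)
    have "dist (z m) (z (m + Suc k)) \<le> dist (z m) (z (m + k)) + dist (z (m+k)) (z (Suc (m+k)))"
      by (simp add: dist_triangle)
    also have "\<dots> \<le> 4 * (1/2)^m - 4 * (1/2)^(m+k) + 2 * (1/2)^(m+k)"
      using Suc h[of "m+k"] by linarith
    also have "\<dots> = 4 * (1/2)^m - 4 * (1/2)^(m + Suc k)" by simp
    finally show ?case .
  qed
  show ?thesis
  proof (rule CauchyI')
    fix e :: real assume e: "0 < e"
    obtain M where M: "(1/2::real)^M < e/4" using real_arch_pow_inv[of "e/4" "1/2"] e by auto
    show "\<exists>M. \<forall>m\<ge>M. \<forall>n>m. dist (z m) (z n) < e"
    proof (intro exI allI impI)
      fix m n assume mM: "M \<le> m" and mn: "m < n"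
      have "(1/2::real)^m \<le> (1/2)^M" using mM by (simp add: power_decreasing)
      moreover have "dist (z m) (z n) \<le> 4 * (1/2)^m - 4 * (1/2)^n" using tel[of m "n-m"] mn by simp
      moreover have "(0::real) \<le> 4 * (1/2)^n" by simp
      ultimately show "dist (z m) (z n) < e" using M by linarith
    qed
  qed
qed


definition katetov :: "nat set \<Rightarrow> (nat \<Rightarrow> 'a::metric_space) \<Rightarrow> (nat \<Rightarrow> real) \<Rightarrow> bool" where
  "katetov I p d \<longleftrightarrow> (\<forall>i\<in>I. \<forall>j\<in>I. \<bar>d i - d j\<bar> \<le> dist (p i) (p j) \<and> dist (p i) (p j) \<le> d i + d j)"

lemma approx_ext:
  fixes r :: "nat \<Rightarrow> nat \<Rightarrow> real" and e :: "nat \<Rightarrow> 'a::metric_space"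
  assumes univ: "universal r"
    and iso: "\<forall>i\<ge>1. \<forall>j\<ge>1. dist (e i) (e j) = r i j"
    and dense: "closure (e ` {1..}) = UNIV"
    and fin: "finite I" and kat: "katetov I p d" and eps: "\<epsilon> > 0"
  shows "\<exists>m\<ge>1. \<forall>i\<in>I. \<bar>dist (e m) (p i) - d i\<bar> < \<epsilon>"
proof (cases "I = {}")
  case True then show ?thesis by auto
next
  case ne: False
  define \<theta> where "\<theta> = \<epsilon> / 3"
  have th: "\<theta> > 0" using eps by (simp add: \<theta>_def)
  have "\<forall>i. \<exists>m. m \<ge> 1 \<and> dist (e m) (p i) < \<theta>"
  proof
    fix i
    have "p i \<in> closure (e ` {1..})" using dense by simp
    then obtain y where "y \<in> e ` {1..}" "dist y (p i) < \<theta>" using th unfolding closure_approachable by blast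
    then show "\<exists>m. m \<ge> 1 \<and> dist (e m) (p i) < \<theta>" by auto
  qed
  then obtain mi where mi: "\<And>i. mi i \<ge> 1" "\<And>i. dist (e (mi i)) (p i) < \<theta>" by (metis (no_types))
  define L where "L = Max (mi ` I)"
  have miL: "mi i \<le> L" if "i \<in> I" for i using fin that by (simp add: L_def)
  define f where "f j = Min ((\<lambda>i. d i + dist (e j) (p i)) ` I)" for j
  have f_le: "f j \<le> d i + dist (e j) (p i)" if "i \<in> I" for i j
    using fin that by (simp add: f_def)
  have f_in: "\<exists>i\<in>I. f j = d i + dist (e j) (p i)" for j
  proof -
    have "f j \<in> (\<lambda>i. d i + dist (e j) (p i)) ` I"
      unfolding f_def using fin ne by (intro Min_in) auto
    then show ?thesis by auto
  qed
  have dpos: "d i \<ge> 0" if "i \<in> I" for i using kat that unfolding katetov_def by fastforce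
  have f_lip: "f j - f j' \<le> dist (e j) (e j')" for j j'
  proof -
    obtain i where i: "i \<in> I" "f j' = d i + dist (e j') (p i)" using f_in by blast
    have "f j \<le> d i + dist (e j) (p i)" using f_le i by simp
    moreover have "dist (e j) (p i) \<le> dist (e j) (e j') + dist (e j') (p i)" by (rule dist_triangle)
    ultimately show ?thesis using i by linarith
  qed
  have f_sum: "dist (e j) (e j') \<le> f j + f j'" for j j'
  proof -
    obtain i where i: "i \<in> I" "f j = d i + dist (e j) (p i)" using f_in by blast
    obtain l where l: "l \<in> I" "f j' = d l + dist (e j') (p l)" using f_in by blast
    have "dist (p i) (p l) \<le> d i + d l" using kat i l unfolding katetov_def by blast
    moreover have "dist (e j) (e j') \<le> dist (e j) (p i) + dist (p i) (p l) + dist (p l) (e j')"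
      using dist_triangle[of "e j" "e j'" "p i"] dist_triangle[of "p i" "e j'" "p l"] by linarith
    moreover have "dist (p l) (e j') = dist (e j') (p l)" by (rule dist_commute)
    ultimately show ?thesis using i l by linarith
  qed
  have "f \<in> Aset L (corner L r)"
    unfolding Aset_def corner_def
  proof (intro CollectI ballI)
    fix i j assume i: "i \<in> {1..L}" and j: "j \<in> {1..L}"
    have rij: "r i j = dist (e i) (e j)" using iso i j by auto
    show "\<bar>f i - f j\<bar> \<le> (if i \<le> L \<and> j \<le> L then r i j else 0) \<and> (if i \<le> L \<and> j \<le> L then r i j else 0) \<le> f i + f j"
      using i j rij f_lip[of i j] f_lip[of j i] f_sum[of i j] dist_commute[of "e i" "e j"] by (simp add: abs_le_iff)
  qed
  then obtain m where m: "m \<ge> 1" "\<forall>j\<in>{1..L}. \<bar>r j m - f j\<bar> < \<theta>"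
    using univ th unfolding universal_def by blast
  show ?thesis
  proof (intro exI conjI ballI)
    show "1 \<le> m" by fact
    fix i assume i: "i \<in> I"
    have mj: "mi i \<in> {1..L}" using mi miL i by auto
    have r1: "\<bar>dist (e (mi i)) (e m) - f (mi i)\<bar> < \<theta>" using m mj iso mi(1) by auto
    have f1: "f (mi i) \<le> d i + \<theta>" using f_le[OF i, of "mi i"] mi(2)[of i] by simp
    obtain l where l: "l \<in> I" "f (mi i) = d l + dist (e (mi i)) (p l)" using f_in by blast
    have "d i \<le> d l + dist (p i) (p l)" using kat i l(1) unfolding katetov_def by fastforce
    moreover have "dist (p i) (p l) \<le> dist (p i) (e (mi i)) + dist (e (mi i)) (p l)" by (rule dist_triangle)
    moreover have "dist (p i) (e (mi i)) = dist (e (mi i)) (p i)" by (rule dist_commute)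
    ultimately have f2: "d i - \<theta> \<le> f (mi i)" using l mi(2)[of i] by linarith
    have t1: "dist (e m) (p i) \<le> dist (e m) (e (mi i)) + dist (e (mi i)) (p i)" by (rule dist_triangle)
    have t2: "dist (e m) (e (mi i)) \<le> dist (e m) (p i) + dist (p i) (e (mi i))" by (rule dist_triangle)
    show "\<bar>dist (e m) (p i) - d i\<bar> < \<epsilon>"
      using r1 f1 f2 t1 t2 mi(2)[of i] dist_commute[of "p i" "e (mi i)"] dist_commute[of "e m" "e (mi i)"] unfolding \<theta>_def abs_less_iff by linarith
  qed
qed


lemma katetov_extend:
  fixes p :: "nat \<Rightarrow> 'a::metric_space" and y :: 'a
  assumes fin: "finite I" and ne: "I \<noteq> {}" and kat: "katetov I p d" and k: "k \<notin> I"
  defines "h \<equiv> Max ((\<lambda>i. \<bar>dist y (p i) - d i\<bar>) ` I)"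
  shows "katetov (insert k I) (p(k := y)) (d(k := h))"
proof -
  have hge: "\<bar>dist y (p i) - d i\<bar> \<le> h" if "i \<in> I" for i using fin that by (simp add: h_def)
  obtain j where j: "j \<in> I" "h = \<bar>dist y (p j) - d j\<bar>"
  proof -
    have "h \<in> (\<lambda>i. \<bar>dist y (p i) - d i\<bar>) ` I" unfolding h_def using fin ne by (intro Max_in) auto
    then show ?thesis using that by auto
  qed
  have main: "\<bar>d i - h\<bar> \<le> dist (p i) y \<and> dist (p i) y \<le> d i + h" if i: "i \<in> I" for i
  proof -
    have kij: "\<bar>d i - d j\<bar> \<le> dist (p i) (p j)" "dist (p i) (p j) \<le> d i + d j"
      using kat i j(1) unfolding katetov_def by auto
    have t1: "dist y (p j) \<le> dist y (p i) + dist (p i) (p j)" by (rule dist_triangle)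
    have t2: "dist (p i) (p j) \<le> dist (p i) y + dist y (p j)" by (rule dist_triangle)
    have c: "dist (p i) y = dist y (p i)" by (rule dist_commute)
    show ?thesis using hge[OF i] j(2) kij t1 t2 c by (auto simp: abs_le_iff abs_if split: if_splits)
  qed
  show ?thesis unfolding katetov_def
  proof (intro ballI)
    fix i l assume i: "i \<in> insert k I" and l: "l \<in> insert k I"
    show "\<bar>(d(k := h)) i - (d(k := h)) l\<bar> \<le> dist ((p(k := y)) i) ((p(k := y)) l) \<and>
          dist ((p(k := y)) i) ((p(k := y)) l) \<le> (d(k := h)) i + (d(k := h)) l"
    proof (cases "i = k"; cases "l = k")
      assume "i = k" "l = k"
      moreover have "h \<ge> 0" using j by simp
      ultimately show ?thesis by simp
    next
      assume "i = k" "l \<noteq> k"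
      then have "l \<in> I" using l by auto
      then show ?thesis using main[of l] \<open>i = k\<close> \<open>l \<noteq> k\<close> k
        by (auto simp: dist_commute abs_minus_commute)
    next
      assume "i \<noteq> k" "l = k"
      then have "i \<in> I" using i by auto
      then show ?thesis using main[of i] \<open>i \<noteq> k\<close> \<open>l = k\<close> k by auto
    next
      assume "i \<noteq> k" "l \<noteq> k"
      then have "i \<in> I" "l \<in> I" using i l by auto
      then show ?thesis using kat \<open>i \<noteq> k\<close> \<open>l \<noteq> k\<close> unfolding katetov_def by auto
    qed
  qed
qed

lemma exact_ext:
  fixes r :: "nat \<Rightarrow> nat \<Rightarrow> real" and e :: "nat \<Rightarrow> 'a::{metric_space,complete_space}" and p :: "nat \<Rightarrow> 'a"
  assumes univ: "universal r"
    and iso: "\<forall>i\<ge>1. \<forall>j\<ge>1. dist (e i) (e j) = r i j"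
    and dense: "closure (e ` {1..}) = UNIV"
    and fin: "finite I" and kat: "katetov I p d"
  shows "\<exists>x. \<forall>i\<in>I. dist x (p i) = d i"
proof (cases "I = {}")
  case True then show ?thesis by auto
next
  case ne: False
  define H where "H y = Max ((\<lambda>i. \<bar>dist y (p i) - d i\<bar>) ` I)" for y
  obtain k where k: "k \<notin> I" using fin infinite_UNIV_nat ex_new_if_finite by blast
  have step: "\<exists>x. (\<forall>i\<in>I. \<bar>dist x (p i) - d i\<bar> < \<epsilon>) \<and> dist x y < H y + \<epsilon>" if eps: "\<epsilon> > 0" for y \<epsilon>
  proof -
    have kk: "katetov (insert k I) (p(k := y)) (d(k := H y))"
      unfolding H_def by (rule katetov_extend[OF fin ne kat k])
    have fin': "finite (insert k I)" using fin by simp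
    from approx_ext[OF univ iso dense fin' kk eps]
    obtain m where m: "\<forall>i\<in>insert k I. \<bar>dist (e m) ((p(k := y)) i) - (d(k := H y)) i\<bar> < \<epsilon>" by auto
    have "\<forall>i\<in>I. \<bar>dist (e m) (p i) - d i\<bar> < \<epsilon>" using m k by (metis fun_upd_other insert_iff)
    moreover have "\<bar>dist (e m) y - H y\<bar> < \<epsilon>" using m by auto
    ultimately show ?thesis by (auto simp: abs_less_iff)
  qed
  have Hlt: "H y < c" if "\<forall>i\<in>I. \<bar>dist y (p i) - d i\<bar> < c" for y c
  proof -
    have "H y \<in> (\<lambda>i. \<bar>dist y (p i) - d i\<bar>) ` I" unfolding H_def using fin ne by (intro Max_in) auto
    then show ?thesis using that by auto
  qed
  have "\<forall>y n. \<exists>x. (\<forall>i\<in>I. \<bar>dist x (p i) - d i\<bar> < (1/2::real)^n) \<and> dist x y < H y + (1/2)^n"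
  proof (intro allI)
    fix y and n :: nat
    show "\<exists>x. (\<forall>i\<in>I. \<bar>dist x (p i) - d i\<bar> < (1/2::real)^n) \<and> dist x y < H y + (1/2)^n"
      by (rule step) simp
  qed
  then obtain F where F: "\<And>y n. (\<forall>i\<in>I. \<bar>dist (F y n) (p i) - d i\<bar> < (1/2)^n) \<and> dist (F y n) y < H y + (1/2)^n"
    by metis
  define z where "z = rec_nat (F undefined 0) (\<lambda>n y. F y (Suc n))"
  have z0: "z 0 = F undefined 0" and zS: "z (Suc n) = F (z n) (Suc n)" for n by (simp_all add: z_def)
  have inv: "\<forall>i\<in>I. \<bar>dist (z n) (p i) - d i\<bar> < (1/2)^n" for n
  proof (cases n)
    case 0 then show ?thesis using F[of undefined 0] z0 by simp
  next
    case (Suc m) then show ?thesis using F[of "z m" "Suc m"] zS[of m] by simp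
  qed
  have "dist (z n) (z (Suc n)) \<le> 2 * (1/2)^n" for n
  proof -
    have "H (z n) < (1/2)^n" using Hlt inv by blast
    moreover have "dist (z (Suc n)) (z n) < H (z n) + (1/2)^(Suc n)" using F zS by metis
    moreover have "(0::real) \<le> (1/2)^n" by simp
    moreover have "(1/2::real)^(Suc n) = (1/2)^n / 2" by simp
    ultimately show ?thesis using dist_commute[of "z n" "z (Suc n)"] by linarith
  qed
  then have "Cauchy z" by (rule geo_cauchy)
  then obtain x where x: "z \<longlonglongrightarrow> x" using Cauchy_convergent_iff convergent_def by blast
  have "dist x (p i) = d i" if i: "i \<in> I" for i
  proof -
    have l1: "(\<lambda>n. dist (z n) (p i)) \<longlonglongrightarrow> dist x (p i)" using x by (intro tendsto_intros)
    have "(\<lambda>n. (1/2::real)^n) \<longlonglongrightarrow> 0" by (rule LIMSEQ_realpow_zero) auto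
    then have "(\<lambda>n. dist (z n) (p i) - d i) \<longlonglongrightarrow> 0"
      by (rule Lim_null_comparison[rotated]) (use inv i in \<open>auto intro!: always_eventually less_imp_le\<close>)
    then have "(\<lambda>n. dist (z n) (p i) - d i + d i) \<longlonglongrightarrow> 0 + d i" by (intro tendsto_intros)
    then have l2: "(\<lambda>n. dist (z n) (p i)) \<longlonglongrightarrow> d i" by simp
    show ?thesis using LIMSEQ_unique[OF l1 l2] .
  qed
  then show ?thesis by blast
qed


theorem corollary4:
  fixes r :: "nat \<Rightarrow> nat \<Rightarrow> real"
    and e :: "nat \<Rightarrow> 'a::{metric_space, complete_space}"
    and a :: "nat \<Rightarrow> 'a"
    and q :: "nat \<Rightarrow> nat \<Rightarrow> real"
    and n N :: nat
  assumes univ: "universal r"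
    and iso: "\<forall>i\<ge>1. \<forall>j\<ge>1. dist (e i) (e j) = r i j"
    and dense: "closure (e ` {1..}) = UNIV"
    and a_inj: "inj_on a {1..n}"
    and nN: "n < N"
    and q_dm: "distance_matrix N q"
    and q_corner: "\<forall>i\<in>{1..n}. \<forall>j\<in>{1..n}. q i j = dist (a i) (a j)"
  shows "\<exists>b :: nat \<Rightarrow> 'a. (\<forall>i\<in>{1..n}. b i = a i) \<and>
           (\<forall>i\<in>{1..N}. \<forall>j\<in>{1..N}. dist (b i) (b j) = q i j)"
proof -
  have q0: "q i i = 0" if "i \<in> {1..N}" for i using q_dm that unfolding distance_matrix_def by blast
  have qs: "q i j = q j i" if "i \<in> {1..N}" "j \<in> {1..N}" for i j
    using q_dm that unfolding distance_matrix_def by blast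
  have qt: "q i j \<le> q i k + q k j" if "i \<in> {1..N}" "j \<in> {1..N}" "k \<in> {1..N}" for i j k
    using q_dm that unfolding distance_matrix_def by blast
  have "\<exists>b :: nat \<Rightarrow> 'a. (\<forall>i\<in>{1..n}. b i = a i) \<and>
           (\<forall>i\<in>{1..k}. \<forall>j\<in>{1..k}. dist (b i) (b j) = q i j)" if "n \<le> k" "k \<le> N" for k
    using that
  proof (induction k rule: dec_induct)
    case base
    then show ?case using q_corner by (intro exI[of _ a]) auto
  next
    case (step k)
    then obtain b where b1: "\<forall>i\<in>{1..n}. b i = a i"
      and b2: "\<forall>i\<in>{1..k}. \<forall>j\<in>{1..k}. dist (b i) (b j) = q i j" by auto
    have kN: "Suc k \<le> N" using step by simp
    have kat: "katetov {1..k} b (\<lambda>i. q i (Suc k))"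
      unfolding katetov_def
    proof (intro ballI)
      fix i j assume i: "i \<in> {1..k}" and j: "j \<in> {1..k}"
      have iN: "i \<in> {1..N}" and jN: "j \<in> {1..N}" and kN': "Suc k \<in> {1..N}" using i j kN by auto
      have "dist (b i) (b j) = q i j" using b2 i j by blast
      moreover have "q i (Suc k) \<le> q i j + q j (Suc k)" using qt[OF iN kN' jN] .
      moreover have "q j (Suc k) \<le> q j i + q i (Suc k)" using qt[OF jN kN' iN] .
      moreover have "q i j \<le> q i (Suc k) + q (Suc k) j" using qt[OF iN jN kN'] .
      moreover have "q j i = q i j" using qs[OF iN jN] by simp
      moreover have "q (Suc k) j = q j (Suc k)" using qs[OF jN kN'] by simp
      ultimately show "\<bar>q i (Suc k) - q j (Suc k)\<bar> \<le> dist (b i) (b j) \<and> dist (b i) (b j) \<le> q i (Suc k) + q j (Suc k)"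
        by (simp add: abs_le_iff)
    qed
    obtain x where x: "\<forall>i\<in>{1..k}. dist x (b i) = q i (Suc k)"
      using exact_ext[OF univ iso dense _ kat] by auto
    define b' where "b' = b(Suc k := x)"
    show ?case
    proof (intro exI[of _ b'] conjI ballI)
      fix i assume "i \<in> {1..n}" then show "b' i = a i" using b1 step(1) by (auto simp: b'_def)
    next
      fix i j assume i: "i \<in> {1..Suc k}" and j: "j \<in> {1..Suc k}"
      have iN: "i \<in> {1..N}" and jN: "j \<in> {1..N}" using i j kN by auto
      show "dist (b' i) (b' j) = q i j"
      proof (cases "i = Suc k"; cases "j = Suc k")
        assume "i = Suc k" "j = Suc k" then show ?thesis using q0[OF iN] by (simp add: b'_def)
      next
        assume "i = Suc k" "j \<noteq> Suc k"
        then have "j \<in> {1..k}" using j by auto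
        then show ?thesis using x \<open>i = Suc k\<close> \<open>j \<noteq> Suc k\<close> qs[OF iN jN] by (auto simp: b'_def)
      next
        assume "i \<noteq> Suc k" "j = Suc k"
        then have "i \<in> {1..k}" using i by auto
        then show ?thesis using x \<open>i \<noteq> Suc k\<close> \<open>j = Suc k\<close> by (auto simp: b'_def dist_commute)
      next
        assume "i \<noteq> Suc k" "j \<noteq> Suc k"
        then have "i \<in> {1..k}" "j \<in> {1..k}" using i j by auto
        then show ?thesis using b2 \<open>i \<noteq> Suc k\<close> \<open>j \<noteq> Suc k\<close> by (auto simp: b'_def)
      qed
    qed
  qed
  then show ?thesis using nN by simp
qed


end
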